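(* Let $\mathfrak{H}$ be a Euclidean space and let $(\mathcal{X},\mathsf{S},\gamma,(\Lambda_{a})_{a\in\mathcal{A}})$ be a spectral decomposition system for $\mathfrak{H}$ such that the set $\{\Lambda_a\}_{a\in\mathcal{A}}$ is closed in $\mathscr{L}(\mathcal{X},\mathfrak{H})$. Let $(X_n)_{n\in\mathbb{N}}$ be a sequence in $\mathfrak{H}$ converging to some $X\in\mathfrak{H}$ and, for every $n\in\mathbb{N}$, let $a_n\in\mathcal{A}_{X_n}$. Suppose that there exists $a\in\mathcal{A}$ such that $\Lambda_{a_n}\to\Lambda_a$ in $\mathscr{L}(\mathcal{X},\mathfrak{H})$. Then $a\in\mathcal{A}_X$.
   Context: A Euclidean space is a finite-dimensional real Hilbert space. $\mathscr{L}(\mathcal{X},\mathfrak{H})$ is the space of linear operators from $\mathcal{X}$ to $\mathfrak{H}$ with the operator-norm topology. A spectral decomposition system for a Euclidean space $\mathfrak{H}$ is a tuple $(\mathcal{X},\mathsf{S},\gamma,(\Lambda_a)_{a\in\mathcal{A}})$ where $\mathcal{X}$ is a Euclidean space, $\mathsf{S}$ is a group acting on $\mathcal{X}$ such that each map $x\mapsto \mathsf{s}\cdot x$ ($\mathsf{s}\in\mathsf{S}$) is a linear isometry, $\gamma\colon\mathfrak{H}\to\mathcal{X}$ is a mapping, and each $\Lambda_a\colon\mathcal{X}\to\mathfrak{H}$ is a linear isometry (linear with $\|\Lambda_a x\|=\|x\|$), such that: [A] there exists a mapping $\tau\colon\mathcal{X}\to\mathcal{X}$ with $\tau(\mathsf{s}\cdot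 x)=\tau(x)$ for all $\mathsf{s},x$, $\tau(x)\in\mathsf{S}\cdot x=\{\mathsf{s}\cdot x:\mathsf{s}\in\mathsf{S}\}$ for all $x\in\mathcal{X}$, and $\gamma\circ\Lambda_a=\tau$ for all $a\in\mathcal{A}$; [B] for every $X\in\mathfrak{H}$ there exists $a\in\mathcal{A}$ with $X=\Lambda_a\gamma(X)$; [C] $\langle X,Y\rangle\le\langle\gamma(X),\gamma(Y)\rangle$ for all $X,Y\in\mathfrak{H}$. For $X\in\mathfrak{H}$, $\mathcal{A}_X=\{a\in\mathcal{A}: X=\Lambda_a\gamma(X)\}$. *)

theory Defs
  imports "HOL-Analysis.Analysis" "HOL-Algebra.Group"
begin

definition lin_isometry :: "('x::real_normed_vector \<Rightarrow> 'y::real_normed_vector) \<Rightarrow> bool" where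
  "lin_isometry f \<longleftrightarrow> linear f \<and> (\<forall>x. norm (f x) = norm x)"

definition isometric_group_action ::
  "('s, 'm) monoid_scheme \<Rightarrow> ('s \<Rightarrow> 'x::real_normed_vector \<Rightarrow> 'x) \<Rightarrow> bool" where
  "isometric_group_action G act \<longleftrightarrow>
     group G \<and>
     (\<forall>x. act \<one>\<^bsub>G\<^esub> x = x) \<and>
     (\<forall>g\<in>carrier G. \<forall>h\<in>carrier G. \<forall>x. act (g \<otimes>\<^bsub>G\<^esub> h) x = act g (act h x)) \<and>
     (\<forall>g\<in>carrier G. lin_isometry (act g))"

definition orbit :: "('s, 'm) monoid_scheme \<Rightarrow> ('s \<Rightarrow> 'x \<Rightarrow> 'x) \<Rightarrow> 'x \<Rightarrow> 'x set" where
  "orbit G act x = {act g x | g. g \<in> carrier G}"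

definition spectral_decomposition_system ::
  "('s, 'm) monoid_scheme \<Rightarrow> ('s \<Rightarrow> 'x::euclidean_space \<Rightarrow> 'x) \<Rightarrow> ('h::euclidean_space \<Rightarrow> 'x)
   \<Rightarrow> 'a set \<Rightarrow> ('a \<Rightarrow> 'x \<Rightarrow> 'h) \<Rightarrow> bool" where
  "spectral_decomposition_system G act gamma A Lam \<longleftrightarrow>
     isometric_group_action G act \<and>
     (\<forall>a\<in>A. lin_isometry (Lam a)) \<and>
     (\<exists>tau :: 'x \<Rightarrow> 'x.
        (\<forall>g\<in>carrier G. \<forall>x. tau (act g x) = tau x) \<and>
        (\<forall>x. tau x \<in> orbit G act x) \<and>
        (\<forall>a\<in>A. \<forall>x. gamma (Lam a x) = tau x)) \<and>
     (\<forall>X. \<exists>a\<in>A. X = Lam a (gamma X)) \<and>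
     (\<forall>X Y. inner X Y \<le> inner (gamma X) (gamma Y))"

definition spec_indices :: "'a set \<Rightarrow> ('a \<Rightarrow> 'x \<Rightarrow> 'h) \<Rightarrow> ('h \<Rightarrow> 'x) \<Rightarrow> 'h \<Rightarrow> 'a set" where
  "spec_indices A Lam gamma X = {a \<in> A. X = Lam a (gamma X)}"

end

theory Submission
  imports Defs
begin

theorem proposition2p17:
  fixes G :: "('s, 'm) monoid_scheme"
    and act :: "'s \<Rightarrow> 'x::euclidean_space \<Rightarrow> 'x"
    and gamma :: "'h::euclidean_space \<Rightarrow> 'x"
    and A :: "'a set"
    and Lam :: "'a \<Rightarrow> 'x \<Rightarrow> 'h"
    and Xs :: "nat \<Rightarrow> 'h" and X :: 'h
    and as :: "nat \<Rightarrow> 'a" and a :: 'a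
  assumes sds: "spectral_decomposition_system G act gamma A Lam"
    and closed_Lam: "closed ((\<lambda>b. Blinfun (Lam b)) ` A)"
    and conv: "Xs \<longlonglongrightarrow> X"
    and as_in: "\<forall>n. as n \<in> spec_indices A Lam gamma (Xs n)"
    and a_in: "a \<in> A"
    and Lam_conv: "(\<lambda>n. Blinfun (Lam (as n))) \<longlonglongrightarrow> Blinfun (Lam a)"
  shows "a \<in> spec_indices A Lam gamma X"
proof -
  have iso: "\<And>b. b \<in> A \<Longrightarrow> lin_isometry (Lam b)"
    and B: "\<And>Y. \<exists>b\<in>A. Y = Lam b (gamma Y)"
    and C: "\<And>Y Z. inner Y Z \<le> inner (gamma Y) (gamma Z)"
    using sds unfolding spectral_decomposition_system_def by blast+
  have app: "\<And>b. b \<in> A \<Longrightarrow> blinfun_apply (Blinfun (Lam b)) = Lam b"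
    using iso unfolding lin_isometry_def
    by (simp add: bounded_linear_Blinfun_apply linear_conv_bounded_linear)
  have nrm: "norm (gamma Y) = norm Y" for Y
  proof -
    obtain b where "b \<in> A" "Y = Lam b (gamma Y)" using B by blast
    then have "norm (Lam b (gamma Y)) = norm (gamma Y)" using iso[of b] unfolding lin_isometry_def by blast
    moreover have "norm Y = norm (Lam b (gamma Y))" using \<open>Y = Lam b (gamma Y)\<close> by (rule arg_cong)
    ultimately show ?thesis by linarith
  qed
  have lip: "norm (gamma Y - gamma Z) \<le> norm (Y - Z)" for Y Z
  proof -
    have "(norm (gamma Y - gamma Z))^2 = (norm (gamma Y))^2 + (norm (gamma Z))^2 - 2 * inner (gamma Y) (gamma Z)"
      by (simp add: power2_norm_eq_inner inner_diff_left inner_diff_right inner_commute)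
    also have "\<dots> \<le> (norm Y)^2 + (norm Z)^2 - 2 * inner Y Z" unfolding nrm using C[of Y Z] by linarith
    also have "\<dots> = (norm (Y - Z))^2"
      by (simp add: power2_norm_eq_inner inner_diff_left inner_diff_right inner_commute)
    finally show ?thesis by (rule power2_le_imp_le) simp
  qed
  have gconv: "(\<lambda>n. gamma (Xs n)) \<longlonglongrightarrow> gamma X"
  proof -
    have "(\<lambda>n. norm (Xs n - X)) \<longlonglongrightarrow> 0"
      using conv by (simp add: tendsto_norm_zero_iff LIM_zero_iff)
    hence "(\<lambda>n. gamma (Xs n) - gamma X) \<longlonglongrightarrow> 0"
      by (rule Lim_null_comparison[rotated]) (simp add: lip)
    thus ?thesis by (rule LIM_zero_cancel)
  qed
  have eq: "Xs n = blinfun_apply (Blinfun (Lam (as n))) (gamma (Xs n))" for n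
  proof -
    have "as n \<in> A" "Xs n = Lam (as n) (gamma (Xs n))" using as_in unfolding spec_indices_def by blast+
    thus ?thesis using app[of "as n"] by metis
  qed
  have "(\<lambda>n. blinfun_apply (Blinfun (Lam (as n))) (gamma (Xs n))) \<longlonglongrightarrow> blinfun_apply (Blinfun (Lam a)) (gamma X)"
    by (rule bounded_bilinear.tendsto[OF bounded_bilinear_blinfun_apply Lam_conv gconv])
  moreover have xs_eq: "Xs = (\<lambda>n. blinfun_apply (Blinfun (Lam (as n))) (gamma (Xs n)))"
    by (rule ext) (rule eq)
  ultimately have "Xs \<longlonglongrightarrow> blinfun_apply (Blinfun (Lam a)) (gamma X)"
    by (subst xs_eq)
  hence "Xs \<longlonglongrightarrow> Lam a (gamma X)" by (simp only: app[OF a_in])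
  hence "X = Lam a (gamma X)" using conv LIMSEQ_unique by blast
  thus ?thesis using a_in unfolding spec_indices_def by blast
qed

end
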